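(* Let $x\in\mathcal D$ be such that $q_n(t)=\sum_{i:\,t^n_i\le t}(x(t^n_{i+1})-x(t^n_i))^2$ converges in $(\mathcal D,d)$ to some $\tilde q$. Then $x\in\mathcal Q_0^\pi$ and $\tilde q=[x]_\pi$.
   Context: Let $\pi=(\pi_n)_{n\ge1}$ be a sequence of partitions $\pi_n=(t^n_0,\dots,t^n_{k_n})$ with $0=t^n_0<\dots<t^n_{k_n}<\infty$, $t^n_{k_n}\uparrow\infty$, and mesh tending to $0$ on compacts; sums over $i$ run over $0\le i<k_n$. $\mathcal D$ is the space of càdlàg functions $[0,\infty)\to\mathbb R$ with a metric $d$ inducing the Skorokhod $J_1$ topology; $\Delta x(u)=x(u)-x(u-)$. $\mathcal{Q}_0^\pi$ is the set of $x\in\mathcal D$ such that the measures $\mu_n=\sum_i(x(t^n_{i+1})-x(t^n_i))^2\delta_{t^n_i}$ converge vaguely to a Radon measure $\mu$ on $[0,\infty)$ such that $t\mapsto\mu([0,t])-\sum_{u\le t}(\Delta x(u))^2$ is a continuous nondecreasing function; for such $x$, $[x]_\pi(t):=\mu([0,t])$. *)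

theory Defs
  imports "HOL-Analysis.Analysis"
begin

text \<open>Functions on [0,oo) are represented as real => real; values at negative
  arguments are irrelevant.\<close>

definition cadlag :: "(real \<Rightarrow> real) \<Rightarrow> bool" where
  "cadlag x \<longleftrightarrow>
     (\<forall>s\<ge>0. (x \<longlongrightarrow> x s) (at_right s)) \<and>
     (\<forall>s>0. \<exists>l. (x \<longlongrightarrow> l) (at_left s))"

text \<open>Jump Delta x(u) = x(u) - x(u-), with the convention x(0-) = x(0).\<close>
definition jump :: "(real \<Rightarrow> real) \<Rightarrow> real \<Rightarrow> real" where
  "jump x u = (if u > 0 then x u - Lim (at_left u) x else 0)"

text \<open>A sequence of partitions pi_n = (t n 0, ..., t n (k n)).\<close>
definition partition_seq :: "(nat \<Rightarrow> nat) \<Rightarrow> (nat \<Rightarrow> nat \<Rightarrow> real) \<Rightarrow> bool" where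
  "partition_seq k t \<longleftrightarrow>
     (\<forall>n. t n 0 = 0) \<and>
     (\<forall>n. \<forall>i<k n. t n i < t n (Suc i)) \<and>
     mono (\<lambda>n. t n (k n)) \<and> filterlim (\<lambda>n. t n (k n)) at_top sequentially \<and>
     (\<forall>T. \<forall>\<epsilon>>0. \<forall>\<^sub>F n in sequentially. \<forall>i<k n. t n i \<le> T \<longrightarrow> t n (Suc i) - t n i < \<epsilon>)"

definition time_change :: "(real \<Rightarrow> real) \<Rightarrow> bool" where
  "time_change l \<longleftrightarrow> continuous_on {0..} l \<and> strict_mono_on {0..} l \<and>
     l 0 = 0 \<and> l ` {0..} = {0..}"

text \<open>Convergence in the Skorokhod J1 topology on D[0,oo) (characterisation of
  Jacod-Shiryaev VI.1.14; independent of the choice of compatible metric d).\<close>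
definition skorokhod_tendsto :: "(nat \<Rightarrow> real \<Rightarrow> real) \<Rightarrow> (real \<Rightarrow> real) \<Rightarrow> bool" where
  "skorokhod_tendsto xs y \<longleftrightarrow>
     (\<exists>l. (\<forall>n. time_change (l n)) \<and>
        (\<forall>\<epsilon>>0. \<forall>\<^sub>F n in sequentially. \<forall>s\<ge>0. \<bar>l n s - s\<bar> < \<epsilon>) \<and>
        (\<forall>N. \<forall>\<epsilon>>0. \<forall>\<^sub>F n in sequentially. \<forall>s\<in>{0..N}. \<bar>xs n (l n s) - y s\<bar> < \<epsilon>))"

text \<open>Integral of f against mu_n = sum_i (x(t_{i+1})-x(t_i))^2 delta_{t_i}.\<close>
definition qv_measure_int ::
  "(nat \<Rightarrow> nat) \<Rightarrow> (nat \<Rightarrow> nat \<Rightarrow> real) \<Rightarrow> (real \<Rightarrow> real) \<Rightarrow> nat \<Rightarrow> (real \<Rightarrow> real) \<Rightarrow> real" where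
  "qv_measure_int k t x n f = (\<Sum>i<k n. (x (t n (Suc i)) - x (t n i))\<^sup>2 * f (t n i))"

definition qv_limit ::
  "(nat \<Rightarrow> nat) \<Rightarrow> (nat \<Rightarrow> nat \<Rightarrow> real) \<Rightarrow> (real \<Rightarrow> real) \<Rightarrow> real measure \<Rightarrow> bool" where
  "qv_limit k t x \<mu> \<longleftrightarrow>
     sets \<mu> = sets (restrict_space borel {0::real..}) \<and>
     (\<forall>T. emeasure \<mu> {0..T} < \<infinity>) \<and>
     (\<forall>f. continuous_on {0..} f \<and> (\<exists>K. \<forall>s\<ge>K. f s = 0) \<longrightarrow>
          (\<lambda>n. qv_measure_int k t x n f) \<longlonglongrightarrow> integral\<^sup>L \<mu> f) \<and>
     (\<forall>s\<ge>0. (\<lambda>u. (jump x u)\<^sup>2) summable_on {0<..s}) \<and>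
     continuous_on {0..} (\<lambda>s. measure \<mu> {0..s} - (\<Sum>\<^sub>\<infinity>u\<in>{0<..s}. (jump x u)\<^sup>2)) \<and>
     mono_on {0..} (\<lambda>s. measure \<mu> {0..s} - (\<Sum>\<^sub>\<infinity>u\<in>{0<..s}. (jump x u)\<^sup>2))"

definition in_Q0 :: "(nat \<Rightarrow> nat) \<Rightarrow> (nat \<Rightarrow> nat \<Rightarrow> real) \<Rightarrow> (real \<Rightarrow> real) \<Rightarrow> bool" where
  "in_Q0 k t x \<longleftrightarrow> cadlag x \<and> (\<exists>\<mu>. qv_limit k t x \<mu>)"

definition quad_var :: "(nat \<Rightarrow> nat) \<Rightarrow> (nat \<Rightarrow> nat \<Rightarrow> real) \<Rightarrow> (real \<Rightarrow> real) \<Rightarrow> real \<Rightarrow> real" where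
  "quad_var k t x s = measure (THE \<mu>. qv_limit k t x \<mu>) {0..s}"

definition qv_approx :: "(nat \<Rightarrow> nat) \<Rightarrow> (nat \<Rightarrow> nat \<Rightarrow> real) \<Rightarrow> (real \<Rightarrow> real) \<Rightarrow> nat \<Rightarrow> real \<Rightarrow> real" where
  "qv_approx k t x n s = (\<Sum>i\<in>{i. i < k n \<and> t n i \<le> s}. (x (t n (Suc i)) - x (t n i))\<^sup>2)"

end

theory Submission
  imports Defs
begin

lemma measure_eq_nonneg_Icc:
  fixes M N :: "real measure"
  assumes sM: "sets M = sets (restrict_space borel {0::real..})"
    and sN: "sets N = sets (restrict_space borel {0::real..})"
    and fin: "\<And>b. emeasure M {0..b} < \<infinity>"
    and eq: "\<And>b. b \<ge> 0 \<Longrightarrow> emeasure M {0..b} = emeasure N {0..b}"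
  shows "M = N"
proof (rule measure_eqI_generator_eq[where \<Omega>="{0..}" and E="(\<inter>) {0::real..} ` range atMost"
      and A="\<lambda>i. {0..real i}"])
  show "Int_stable ((\<inter>) {0::real..} ` range atMost)"
  proof (unfold Int_stable_def, safe)
    fix a b :: real
    show "{0..} \<inter> {..a} \<inter> ({0..} \<inter> {..b}) \<in> (\<inter>) {0..} ` range atMost"
      by (rule image_eqI[where x="{..min a b}"]) auto
  qed
  show "(\<inter>) {0::real..} ` range atMost \<subseteq> Pow {0..}" by auto
  have S: "sets (restrict_space borel {0::real..}) = sigma_sets {0..} ((\<inter>) {0::real..} ` range atMost)"
  proof -
    have B: "sets borel = sigma_sets UNIV (range (\<lambda>a. {..a::real}))"
      by (subst borel_eq_atMost) (simp add: sets_measure_of)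
    have Z: "{0::real..} \<in> sigma_sets UNIV (range (\<lambda>a. {..a::real}))"
      unfolding B[symmetric] by simp
    have "sets (restrict_space borel {0::real..}) = (\<inter>) {0..} ` sets borel"
      by (rule sets_restrict_space)
    also have "\<dots> = (\<inter>) {0..} ` sigma_sets UNIV (range (\<lambda>a. {..a::real}))" using B by simp
    also have "\<dots> = sigma_sets {0..} ((\<inter>) {0::real..} ` range atMost)"
      by (rule sigma_sets_Int[OF Z]) auto
    finally show ?thesis .
  qed
  show "sets M = sigma_sets {0..} ((\<inter>) {0::real..} ` range atMost)" using sM S by simp
  show "sets N = sigma_sets {0..} ((\<inter>) {0::real..} ` range atMost)" using sN S by simp
  fix X assume "X \<in> (\<inter>) {0::real..} ` range atMost"
  then obtain b where X: "X = {0..} \<inter> {..b}" by auto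
  show "emeasure M X = emeasure N X"
  proof (cases "b \<ge> 0")
    case True then show ?thesis using eq[of b] X by (simp add: atLeastAtMost_def Int_commute)
  next
    case False then have "X = {}" using X by auto
    then show ?thesis by simp
  qed
next
  show "range (\<lambda>i. {0..real i}) \<subseteq> (\<inter>) {0::real..} ` range atMost"
    by (auto simp: image_def atLeastAtMost_def)
  show "(\<Union>i. {0..real i}) = {0..}"
    by (auto, meson real_arch_simple)
  show "emeasure M {0..real i} \<noteq> \<infinity>" for i using fin[of "real i"] by simp
qed

locale S =
  fixes k :: "nat \<Rightarrow> nat" and t :: "nat \<Rightarrow> nat \<Rightarrow> real" and x q :: "real \<Rightarrow> real"
    and l :: "nat \<Rightarrow> real \<Rightarrow> real"
  assumes part: "partition_seq k t" and cx: "cadlag x" and cq: "cadlag q"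
    and tc: "\<And>n. time_change (l n)"
    and lid: "\<And>\<epsilon>. \<epsilon> > 0 \<Longrightarrow> \<forall>\<^sub>F n in sequentially. \<forall>s\<ge>0. \<bar>l n s - s\<bar> < \<epsilon>"
    and conv: "\<And>N \<epsilon>. \<epsilon> > 0 \<Longrightarrow> \<forall>\<^sub>F n in sequentially. \<forall>s\<in>{0..N}. \<bar>qv_approx k t x n (l n s) - q s\<bar> < \<epsilon>"
begin

definition a :: "nat \<Rightarrow> nat \<Rightarrow> real" where "a n i = (x (t n (Suc i)) - x (t n i))\<^sup>2"
abbreviation Qn :: "nat \<Rightarrow> real \<Rightarrow> real" where "Qn \<equiv> qv_approx k t x"

lemma a_nonneg: "a n i \<ge> 0" by (simp add: a_def)

lemma Qn_def: "Qn n s = (\<Sum>i\<in>{i. i < k n \<and> t n i \<le> s}. a n i)"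
  by (simp add: qv_approx_def a_def)

lemma t0: "t n 0 = 0" using part by (simp add: partition_seq_def)
lemma t_step: "i < k n \<Longrightarrow> t n i < t n (Suc i)" using part by (simp add: partition_seq_def)

lemma t_less: "i < j \<Longrightarrow> j \<le> k n \<Longrightarrow> t n i < t n j"
proof (induction j)
  case 0 then show ?case by simp
next
  case (Suc j)
  then show ?case using t_step[of j n] by (cases "i = j") auto
qed

lemma t_le: "i \<le> j \<Longrightarrow> j \<le> k n \<Longrightarrow> t n i \<le> t n j"
  using t_less[of i j n] by (cases "i = j") auto

lemma t_nonneg: "i \<le> k n \<Longrightarrow> t n i \<ge> 0"
  using t_le[of 0 i n] t0 by simp

lemma t_inj: "i \<le> k n \<Longrightarrow> j \<le> k n \<Longrightarrow> t n i = t n j \<Longrightarrow> i = j"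
  using t_less[of i j n] t_less[of j i n] by (cases "i < j"; cases "j < i") auto

lemma mesh: "\<epsilon> > 0 \<Longrightarrow> \<forall>\<^sub>F n in sequentially. \<forall>i<k n. t n i \<le> T \<longrightarrow> t n (Suc i) - t n i < \<epsilon>"
  using part by (simp add: partition_seq_def)

lemma tk_big: "\<forall>\<^sub>F n in sequentially. t n (k n) \<ge> T"
  using part unfolding partition_seq_def by (simp add: filterlim_at_top)

lemma Qn_nonneg: "Qn n s \<ge> 0"
  unfolding Qn_def by (rule sum_nonneg) (rule a_nonneg)

lemma Qn_diff: assumes "s \<le> s'"
  shows "Qn n s' - Qn n s = (\<Sum>i\<in>{i. i < k n \<and> s < t n i \<and> t n i \<le> s'}. a n i)"
proof -
  let ?A = "{i. i < k n \<and> t n i \<le> s}" and ?B = "{i. i < k n \<and> s < t n i \<and> t n i \<le> s'}"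
  have U: "{i. i < k n \<and> t n i \<le> s'} = ?A \<union> ?B"
    using assms by auto
  have fA: "finite ?A" by simp
  have fB: "finite ?B" by simp
  have D: "?A \<inter> ?B = {}" by auto
  have "Qn n s' = sum (a n) (?A \<union> ?B)" unfolding Qn_def U ..
  also have "\<dots> = sum (a n) ?A + sum (a n) ?B" by (rule sum.union_disjoint[OF fA fB D])
  finally show ?thesis unfolding Qn_def by simp
qed

lemma Qn_mono: assumes "s \<le> s'" shows "Qn n s \<le> Qn n s'"
proof -
  have "0 \<le> (\<Sum>i\<in>{i. i < k n \<and> s < t n i \<and> t n i \<le> s'}. a n i)"
    by (rule sum_nonneg) (simp add: a_nonneg)
  then show ?thesis using Qn_diff[OF assms, of n] by linarith
qed

lemma Qn_jump_ge: assumes "s < t n i" "t n i \<le> s'" "i < k n"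
  shows "Qn n s' - Qn n s \<ge> a n i"
proof -
  have "a n i \<le> (\<Sum>i\<in>{i. i < k n \<and> s < t n i \<and> t n i \<le> s'}. a n i)"
    by (rule member_le_sum) (use assms a_nonneg in auto)
  then show ?thesis using Qn_diff[of s s' n] assms by simp
qed

lemma l0: "l n 0 = 0" using tc[of n] by (simp add: time_change_def)
lemma l_smono: "0 \<le> s \<Longrightarrow> 0 \<le> s' \<Longrightarrow> s < s' \<Longrightarrow> l n s < l n s'"
  using tc[of n] by (simp add: time_change_def strict_mono_on_def)
lemma l_mono: "0 \<le> s \<Longrightarrow> 0 \<le> s' \<Longrightarrow> s \<le> s' \<Longrightarrow> l n s \<le> l n s'"
  using l_smono[of s s' n] by (cases "s = s'") auto
lemma l_nonneg: "0 \<le> s \<Longrightarrow> 0 \<le> l n s"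
  using tc[of n] by (auto simp: time_change_def)
lemma l_surj: assumes "0 \<le> y" shows "\<exists>s\<ge>0. l n s = y"
proof -
  have "y \<in> l n ` {0..}" using tc[of n] assms unfolding time_change_def by blast
  then show ?thesis by auto
qed
lemma l_cont: "continuous_on {0..} (l n)" using tc[of n] by (simp add: time_change_def)

lemma conv_pt: assumes "0 \<le> s" shows "(\<lambda>n. Qn n (l n s)) \<longlonglongrightarrow> q s"
  unfolding tendsto_iff dist_real_def
proof (intro allI impI)
  fix e :: real assume "e > 0"
  have "\<forall>\<^sub>F n in sequentially. \<forall>s'\<in>{0..s}. \<bar>Qn n (l n s') - q s'\<bar> < e"
    using conv[OF \<open>e > 0\<close>] by blast
  then show "\<forall>\<^sub>F n in sequentially. \<bar>Qn n (l n s) - q s\<bar> < e"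
    by (rule eventually_mono) (use assms in auto)
qed

lemma q_nonneg: assumes "0 \<le> s" shows "0 \<le> q s"
proof (rule LIMSEQ_le_const[OF conv_pt[OF assms]])
  show "\<exists>N. \<forall>n\<ge>N. 0 \<le> Qn n (l n s)" using Qn_nonneg by blast
qed

lemma q_mono: assumes "0 \<le> s" "s \<le> s'" shows "q s \<le> q s'"
proof (rule LIMSEQ_le[OF conv_pt[OF assms(1)] conv_pt])
  show "0 \<le> s'" using assms by simp
  show "\<exists>N. \<forall>n\<ge>N. Qn n (l n s) \<le> Qn n (l n s')"
    using assms by (intro exI allI impI Qn_mono l_mono) auto
qed

end

locale MQ =
  fixes q :: "real \<Rightarrow> real"
  assumes mq: "\<And>s s'. 0 \<le> s \<Longrightarrow> s \<le> s' \<Longrightarrow> q s \<le> q s'"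
    and rc: "\<And>s. 0 \<le> s \<Longrightarrow> (q \<longlongrightarrow> q s) (at_right s)"
    and ll: "\<And>s. 0 < s \<Longrightarrow> (q \<longlongrightarrow> Lim (at_left s) q) (at_left s)"
begin

definition L :: "real \<Rightarrow> real" where "L s = Lim (at_left s) q"
definition D :: "real \<Rightarrow> real" where "D u = q u - L u"

lemma L_ge: assumes "0 \<le> r" "r < u" shows "q r \<le> L u"
proof -
  have "\<forall>\<^sub>F y in at_left u. q r \<le> q y"
    unfolding eventually_at_left_field using assms by (intro exI[of _ r]) (auto intro: mq)
  then show ?thesis unfolding L_def
    by (intro tendsto_lowerbound[OF ll]) (use assms in auto)
qed

lemma L_le: assumes "0 < u" shows "L u \<le> q u"
proof -
  have "\<forall>\<^sub>F y in at_left u. q y \<le> q u"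
    unfolding eventually_at_left_field using assms by (intro exI[of _ 0]) (auto intro: mq)
  then show ?thesis unfolding L_def
    by (intro tendsto_upperbound[OF ll]) (use assms in auto)
qed

lemma D_nonneg: "0 < u \<Longrightarrow> 0 \<le> D u" using L_le[of u] by (simp add: D_def)

lemma sumD_le: assumes "finite F" "0 \<le> a"
  shows "F \<subseteq> {a<..b} \<Longrightarrow> a \<le> b \<Longrightarrow> sum D F \<le> q b - q a"
  using assms(1)
proof (induction F arbitrary: b rule: finite_ranking_induct[where f="\<lambda>y. y"])
  case empty
  then show ?case using mq[of a b] assms by simp
next
  case (insert z S)
  show ?case
  proof (cases "z \<in> S")
    case True
    then show ?thesis using insert by (simp add: insert_absorb)
  next
    case False
    have zab: "a < z" "z \<le> b" using insert.prems by auto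
    have "sum D S \<le> L z - q a"
    proof (cases "S = {}")
      case True then show ?thesis using L_ge[of a z] zab assms by simp
    next
      case False
      let ?r = "Max S"
      have rS: "?r \<in> S" using False insert.hyps by simp
      have "?r \<le> z" using insert.hyps rS by blast
      then have rz: "?r < z" using rS \<open>z \<notin> S\<close> by (cases "?r = z") auto
      have "S \<subseteq> {a<..?r}" using insert.prems insert.hyps by auto
      moreover have "a \<le> ?r" using rS insert.prems by auto
      ultimately have "sum D S \<le> q ?r - q a" by (rule insert.IH)
      moreover have "q ?r \<le> L z"
        using L_ge[of ?r z] rz rS insert.prems assms by auto
      ultimately show ?thesis by simp
    qed
    moreover have "q z \<le> q b" using mq zab assms by simp
    ultimately show ?thesis using False insert.hyps by (simp add: D_def)
  qed
qed

lemma sumD_le_open: assumes "finite F" "0 \<le> a" "F \<subseteq> {a<..<b}" "a < b"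
  shows "sum D F \<le> L b - q a"
proof (cases "F = {}")
  case True then show ?thesis using L_ge[of a b] assms by simp
next
  case False
  let ?r = "Max F"
  have rF: "?r \<in> F" using False assms by simp
  have "F \<subseteq> {a<..?r}" using assms by auto
  moreover have "a \<le> ?r" using rF assms by auto
  ultimately have "sum D F \<le> q ?r - q a" using sumD_le assms by blast
  moreover have "q ?r \<le> L b" using L_ge[of ?r b] rF assms by auto
  ultimately show ?thesis by simp
qed

lemma D_summable: assumes "0 \<le> a" "A \<subseteq> {a<..b}" shows "D summable_on A"
proof (rule nonneg_bdd_above_summable_on)
  show "0 \<le> D u" if "u \<in> A" for u using that assms D_nonneg[of u] by auto
  show "bdd_above (sum D ` {F. F \<subseteq> A \<and> finite F})"
  proof (rule bdd_aboveI[where M="max 0 (q b - q a)"])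
    fix y assume "y \<in> sum D ` {F. F \<subseteq> A \<and> finite F}"
    then obtain F where F: "F \<subseteq> A" "finite F" "y = sum D F" by auto
    show "y \<le> max 0 (q b - q a)"
    proof (cases "F = {}")
      case True
      then show ?thesis using F by simp
    next
      case False
      then have "a \<le> b" using F assms by fastforce
      then have "sum D F \<le> q b - q a" using sumD_le[OF F(2) assms(1)] F assms by blast
      then show ?thesis using F by simp
    qed
  qed
qed

lemma infsumD_le: assumes "0 \<le> a" "a \<le> b" shows "infsum D {a<..b} \<le> q b - q a"
proof (rule infsum_le_finite_sums[OF D_summable[OF assms(1) order_refl]])
  fix F assume "finite F" "F \<subseteq> {a<..b}"
  then show "sum D F \<le> q b - q a" using sumD_le assms by blast
qed

lemma infsumD_nonneg: assumes "0 \<le> a" "A \<subseteq> {a<..}" shows "0 \<le> infsum D A"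
  by (rule infsum_nonneg) (use D_nonneg assms in force)

lemma infsumD_le_open: assumes "0 \<le> a" "a < b" shows "infsum D {a<..<b} \<le> L b - q a"
proof (rule infsum_le_finite_sums[OF D_summable[OF assms(1), of _ b]])
  show "{a<..<b} \<subseteq> {a<..b}" by auto
  fix F assume "finite F" "F \<subseteq> {a<..<b}"
  then show "sum D F \<le> L b - q a" using sumD_le_open assms by blast
qed

definition G :: "real \<Rightarrow> real" where "G s = q s - infsum D {0<..s}"

lemma G_split: assumes "0 \<le> s" "s \<le> s'"
  shows "G s' = G s + (q s' - q s - infsum D {s<..s'})"
proof -
  have "{0<..s'} = {0<..s} \<union> {s<..s'}" using assms by auto
  moreover have "infsum D ({0<..s} \<union> {s<..s'}) = infsum D {0<..s} + infsum D {s<..s'}"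
    by (rule infsum_Un_disjoint) (use D_summable assms in auto)
  ultimately show ?thesis unfolding G_def by simp
qed

lemma G_mono: assumes "0 \<le> s" "s \<le> s'" shows "G s \<le> G s'"
  using G_split[OF assms] infsumD_le[of s s'] assms by simp

lemma G_right: assumes "0 \<le> s" "s \<le> s'" shows "G s' - G s \<le> q s' - q s"
proof -
  have "0 \<le> infsum D {s<..s'}" by (rule infsumD_nonneg[OF assms(1)]) auto
  then show ?thesis using G_split[OF assms] by simp
qed

lemma G_left: assumes "0 \<le> r" "r < s" shows "G s - G r \<le> L s - q r"
proof -
  have "infsum D {r<..s} = D s + infsum D {r<..<s}"
  proof -
    have "{r<..s} = insert s {r<..<s}" using assms by auto
    moreover have "infsum D (insert s {r<..<s}) = D s + infsum D {r<..<s}"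
    proof (rule infsum_insert)
      show "D summable_on {r<..<s}" by (rule D_summable[of r _ s]) (use assms in auto)
    qed simp
    ultimately show ?thesis by simp
  qed
  moreover have "0 \<le> infsum D {r<..<s}" by (rule infsumD_nonneg) (use assms in auto)
  ultimately show ?thesis using G_split[of r s] assms by (simp add: D_def)
qed

lemma G_cont: "continuous_on {0..} G"
proof -
  have R: "(G \<longlongrightarrow> G s) (at_right s)" if s0: "0 \<le> s" for s
  proof -
    have q1: "(q \<longlongrightarrow> q s) (at_right s)" using rc[OF s0] .
    have h: "((\<lambda>r. G s + (q r - q s)) \<longlongrightarrow> G s + (q s - q s)) (at_right s)"
      by (intro tendsto_add tendsto_const tendsto_diff q1)
    have ev: "\<forall>\<^sub>F r in at_right s. G s \<le> G r \<and> G r \<le> G s + (q r - q s)"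
      unfolding eventually_at_right_field
    proof (intro exI[of _ "s+1"] conjI allI impI)
      fix r assume "s < r" 
      then show "G s \<le> G r" "G r \<le> G s + (q r - q s)" using G_mono[of s r] G_right[of s r] s0 by auto
    qed simp
    have e1: "\<forall>\<^sub>F r in at_right s. G s \<le> G r" using ev by (rule eventually_mono) blast
    have e2: "\<forall>\<^sub>F r in at_right s. G r \<le> G s + (q r - q s)" using ev by (rule eventually_mono) blast
    show ?thesis using tendsto_sandwich[OF e1 e2 tendsto_const] h by simp
  qed
  have Le: "(G \<longlongrightarrow> G s) (at_left s)" if s0: "0 < s" for s
  proof -
    have q1: "(q \<longlongrightarrow> L s) (at_left s)" using ll[OF s0] unfolding L_def .
    have h: "((\<lambda>r. G s - (L s - q r)) \<longlongrightarrow> G s - (L s - L s)) (at_left s)"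
      by (intro tendsto_diff tendsto_const q1)
    have ev: "\<forall>\<^sub>F r in at_left s. G s - (L s - q r) \<le> G r \<and> G r \<le> G s"
      unfolding eventually_at_left_field
    proof (intro exI[of _ 0] conjI allI impI)
      fix r assume "0 < r" "r < s"
      then show "G r \<le> G s" "G s - (L s - q r) \<le> G r" using G_mono[of r s] G_left[of r s] by auto
    qed (use s0 in simp)
    have e1: "\<forall>\<^sub>F r in at_left s. G s - (L s - q r) \<le> G r" using ev by (rule eventually_mono) blast
    have e2: "\<forall>\<^sub>F r in at_left s. G r \<le> G s" using ev by (rule eventually_mono) blast
    show ?thesis using tendsto_sandwich[OF e1 e2 _ tendsto_const] h by simp
  qed
  show ?thesis
    unfolding continuous_on_def
  proof (intro ballI)
    fix s :: real assume "s \<in> {0..}"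
    then have s: "0 \<le> s" by simp
    show "(G \<longlongrightarrow> G s) (at s within {0..})"
    proof (cases "s = 0")
      case True
      then show ?thesis using R[of 0] by (simp add: at_within_Ici_at_right)
    next
      case False
      then have "(G \<longlongrightarrow> G s) (at s)" using R[OF s] Le[of s] s by (intro filterlim_split_at_real) auto
      then show ?thesis by (rule tendsto_within_subset) simp
    qed
  qed
qed

end

lemma seq_right:
  fixes f :: "real \<Rightarrow> real"
  assumes f: "(f \<longlongrightarrow> f u) (at_right u)" and s: "s \<longlonglongrightarrow> u" and ev: "\<forall>\<^sub>F n in sequentially. s n \<ge> u"
  shows "(\<lambda>n. f (s n)) \<longlonglongrightarrow> f u"
  unfolding tendsto_iff
proof (intro allI impI)
  fix e :: real assume e: "e > 0"
  have "\<forall>\<^sub>F y in at_right u. dist (f y) (f u) < e" using f e by (simp add: tendsto_iff)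
  then obtain b where b: "b > u" "\<And>y. y > u \<Longrightarrow> y < b \<Longrightarrow> dist (f y) (f u) < e"
    unfolding eventually_at_right_field by blast
  have "\<forall>\<^sub>F n in sequentially. s n < b" using s b(1) by (rule order_tendstoD)
  with ev show "\<forall>\<^sub>F n in sequentially. dist (f (s n)) (f u) < e"
  proof eventually_elim
    case (elim n)
    then show ?case using b(2)[of "s n"] e by (cases "s n = u") auto
  qed
qed

lemma seq_left:
  fixes f :: "real \<Rightarrow> real"
  assumes f: "(f \<longlongrightarrow> L) (at_left u)" and s: "s \<longlonglongrightarrow> u" and ev: "\<forall>\<^sub>F n in sequentially. s n < u"
  shows "(\<lambda>n. f (s n)) \<longlonglongrightarrow> L"
proof (rule filterlim_compose[OF f])
  show "filterlim s (at_left u) sequentially"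
    unfolding filterlim_at using s ev by (auto elim: eventually_mono)
qed

context S
begin

lemma x_rc: "0 \<le> s \<Longrightarrow> (x \<longlongrightarrow> x s) (at_right s)" using cx by (simp add: cadlag_def)
lemma x_ll: "0 < s \<Longrightarrow> (x \<longlongrightarrow> Lim (at_left s) x) (at_left s)"
  using cx unfolding cadlag_def by (metis tendsto_Lim trivial_limit_at_left_real)
lemma q_rc: "0 \<le> s \<Longrightarrow> (q \<longlongrightarrow> q s) (at_right s)" using cq by (simp add: cadlag_def)
lemma q_ll: "0 < s \<Longrightarrow> (q \<longlongrightarrow> Lim (at_left s) q) (at_left s)"
  using cq unfolding cadlag_def by (metis tendsto_Lim trivial_limit_at_left_real)

sublocale MQ q
  by unfold_locales (auto intro: q_mono q_rc q_ll)

lemma q0: "q 0 = 0"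
proof -
  have "(\<lambda>n. Qn n (l n 0)) \<longlonglongrightarrow> q 0" by (rule conv_pt) simp
  then have c1: "(\<lambda>n. Qn n 0) \<longlonglongrightarrow> q 0" by (simp add: l0)
  have t1: "(\<lambda>n. t n 1) \<longlonglongrightarrow> 0"
    unfolding tendsto_iff dist_real_def
  proof (intro allI impI)
    fix e :: real assume e: "e > 0"
    have "\<forall>\<^sub>F n in sequentially. t n (k n) \<ge> 1" by (rule tk_big)
    moreover have "\<forall>\<^sub>F n in sequentially. \<forall>i<k n. t n i \<le> 0 \<longrightarrow> t n (Suc i) - t n i < e"
      by (rule mesh[OF e])
    ultimately show "\<forall>\<^sub>F n in sequentially. \<bar>t n 1 - 0\<bar> < e"
    proof eventually_elim
      case (elim n)
      have "k n > 0" using elim(1) t0[of n] by (cases "k n") auto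
      then have "t n 1 - t n 0 < e" "t n 0 < t n 1" using elim(2) t_step[of 0 n] t0[of n] by auto
      then show ?case using t0[of n] by simp
    qed
  qed
  have kpos: "\<forall>\<^sub>F n in sequentially. k n > 0"
    using tk_big[of 1] by (rule eventually_mono) (metis t0 gr0I zero_neq_one order.antisym zero_le_one not_one_le_zero)
  have "(\<lambda>n. x (t n 1)) \<longlonglongrightarrow> x 0"
  proof (rule seq_right[OF x_rc t1])
    show "\<forall>\<^sub>F n in sequentially. 0 \<le> t n 1" using kpos by (rule eventually_mono) (simp add: t_nonneg)
  qed simp
  then have c2: "(\<lambda>n. (x (t n 1) - x 0)\<^sup>2) \<longlonglongrightarrow> (x 0 - x 0)\<^sup>2"
    by (intro tendsto_intros)
  have "\<forall>\<^sub>F n in sequentially. Qn n 0 = (x (t n 1) - x 0)\<^sup>2"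
    using kpos
  proof (rule eventually_mono)
    fix n assume "0 < k n"
    have "{i. i < k n \<and> t n i \<le> 0} = {0}"
    proof safe
      fix i assume "i < k n" "t n i \<le> 0"
      then show "i = 0" using t_less[of 0 i n] t0[of n] by (cases "i = 0") auto
    qed (use \<open>0 < k n\<close> t0 in auto)
    then show "Qn n 0 = (x (t n 1) - x 0)\<^sup>2" by (simp add: Qn_def a_def t0)
  qed
  then have "(\<lambda>n. Qn n 0) \<longlonglongrightarrow> 0" using c2 by (simp add: tendsto_cong)
  then show ?thesis using c1 LIMSEQ_unique by blast
qed

end

context S
begin

definition idx :: "real \<Rightarrow> nat \<Rightarrow> nat" where
  "idx u n = Max {i. i \<le> k n \<and> t n i < u}"

lemma idx_props: assumes "0 < u" "u \<le> t n (k n)"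
  shows "idx u n < k n" "t n (idx u n) < u" "u \<le> t n (Suc (idx u n))"
    "\<And>i. i \<le> k n \<Longrightarrow> t n i < u \<Longrightarrow> i \<le> idx u n"
proof -
  let ?S = "{i. i \<le> k n \<and> t n i < u}"
  have fin: "finite ?S" by simp
  have ne: "0 \<in> ?S" using assms t0[of n] by simp
  have mem: "idx u n \<in> ?S" unfolding idx_def using fin ne by (intro Max_in) auto
  show le: "\<And>i. i \<le> k n \<Longrightarrow> t n i < u \<Longrightarrow> i \<le> idx u n" unfolding idx_def using fin by auto
  show "t n (idx u n) < u" using mem by simp
  show lt: "idx u n < k n" using mem assms by (cases "idx u n = k n") auto
  show "u \<le> t n (Suc (idx u n))"
  proof (rule ccontr)
    assume "\<not> u \<le> t n (Suc (idx u n))"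
    then have "Suc (idx u n) \<le> idx u n" using le[of "Suc (idx u n)"] lt by simp
    then show False by simp
  qed
qed

lemma idx_ev: assumes "0 < u"
  shows "\<forall>\<^sub>F n in sequentially. idx u n < k n \<and> t n (idx u n) < u \<and> u \<le> t n (Suc (idx u n))"
  using tk_big[of u] by (rule eventually_mono) (use idx_props[OF assms] in auto)

lemma idx_tendsto: assumes "0 < u"
  shows "(\<lambda>n. t n (idx u n)) \<longlonglongrightarrow> u" "(\<lambda>n. t n (Suc (idx u n))) \<longlonglongrightarrow> u"
proof -
  have main: "\<forall>\<^sub>F n in sequentially. u - e < t n (idx u n) \<and> t n (Suc (idx u n)) < u + e" if e: "e > 0" for e
    using idx_ev[OF assms] mesh[OF e, of u]
  proof eventually_elim
    case (elim n)
    then have "t n (Suc (idx u n)) - t n (idx u n) < e" by auto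
    then show ?case using elim by auto
  qed
  show "(\<lambda>n. t n (idx u n)) \<longlonglongrightarrow> u"
    unfolding tendsto_iff dist_real_def
  proof (intro allI impI)
    fix e :: real assume e: "e > 0"
    show "\<forall>\<^sub>F n in sequentially. \<bar>t n (idx u n) - u\<bar> < e"
      using main[OF e] idx_ev[OF assms] by eventually_elim auto
  qed
  show "(\<lambda>n. t n (Suc (idx u n))) \<longlonglongrightarrow> u"
    unfolding tendsto_iff dist_real_def
  proof (intro allI impI)
    fix e :: real assume e: "e > 0"
    show "\<forall>\<^sub>F n in sequentially. \<bar>t n (Suc (idx u n)) - u\<bar> < e"
      using main[OF e] idx_ev[OF assms] by eventually_elim auto
  qed
qed

lemma a_idx_tendsto: assumes "0 < u"
  shows "(\<lambda>n. a n (idx u n)) \<longlonglongrightarrow> (x u - Lim (at_left u) x)\<^sup>2"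
proof -
  have "(\<lambda>n. x (t n (Suc (idx u n)))) \<longlonglongrightarrow> x u"
    by (rule seq_right[OF x_rc idx_tendsto(2)[OF assms]]) (use assms idx_ev[OF assms] in \<open>auto elim: eventually_mono\<close>)
  moreover have "(\<lambda>n. x (t n (idx u n))) \<longlonglongrightarrow> Lim (at_left u) x"
    by (rule seq_left[OF x_ll idx_tendsto(1)[OF assms]]) (use assms idx_ev[OF assms] in \<open>auto elim: eventually_mono\<close>)
  ultimately show ?thesis unfolding a_def by (intro tendsto_intros)
qed

end

lemma small_sq: fixes d r :: real assumes "\<bar>d\<bar> \<le> 2*r" "0 \<le> r" "r \<le> 1" shows "d\<^sup>2 \<le> 4*r"
proof -
  have "d\<^sup>2 = \<bar>d\<bar> * \<bar>d\<bar>" by (simp add: power2_eq_square)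
  also have "\<dots> \<le> (2*r) * (2*r)" by (rule mult_mono) (use assms in auto)
  also have "\<dots> = 4 * r * r" by simp
  also have "\<dots> \<le> 4 * r * 1" by (rule mult_left_mono) (use assms in auto)
  finally show ?thesis by simp
qed

lemma absD: fixes a b c :: real assumes "\<bar>a - b\<bar> < c" shows "b - c < a" "a < b + c"
  using assms by auto

context S
begin

lemma jump_lower: assumes u: "0 < u" shows "(x u - Lim (at_left u) x)\<^sup>2 \<le> D u"
proof -
  let ?A = "(x u - Lim (at_left u) x)\<^sup>2"
  have H: "?A \<le> q (u+\<delta>) - q (u-\<delta>)" if d: "0 < \<delta>" "\<delta> < u" for \<delta>
  proof (rule LIMSEQ_le[OF a_idx_tendsto[OF u] tendsto_diff[OF conv_pt conv_pt]])
    show "0 \<le> u + \<delta>" "0 \<le> u - \<delta>" using d by auto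
    have "\<forall>\<^sub>F n in sequentially. u - \<delta>/2 < t n (idx u n)"
      by (rule order_tendstoD[OF idx_tendsto(1)[OF u]]) (use d in simp)
    moreover have "\<forall>\<^sub>F n in sequentially. \<forall>s\<ge>0. \<bar>l n s - s\<bar> < \<delta>/2" by (rule lid) (use d in simp)
    moreover note idx_ev[OF u]
    ultimately have "\<forall>\<^sub>F n in sequentially. a n (idx u n) \<le> Qn n (l n (u + \<delta>)) - Qn n (l n (u - \<delta>))"
    proof eventually_elim
      case (elim n)
      have "u+\<delta> - \<delta>/2 < l n (u+\<delta>)" "l n (u-\<delta>) < u-\<delta> + \<delta>/2"
        using absD[OF elim(2)[rule_format, of "u+\<delta>"]] absD[OF elim(2)[rule_format, of "u-\<delta>"]] d by auto
      then have "l n (u-\<delta>) < t n (idx u n)" "t n (idx u n) \<le> l n (u+\<delta>)" using elim(1,3) d by auto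
      then show ?case using Qn_jump_ge elim(3) by blast
    qed
    then show "\<exists>N. \<forall>n\<ge>N. a n (idx u n) \<le> Qn n (l n (u + \<delta>)) - Qn n (l n (u - \<delta>))"
      by (simp add: eventually_sequentially)
  qed
  define dl where "dl m = u/2 * inverse (real (Suc m))" for m
  have dl0: "dl \<longlonglongrightarrow> 0" unfolding dl_def by (intro tendsto_mult_right_zero LIMSEQ_inverse_real_of_nat)
  have dlpos: "0 < dl m" "dl m < u" for m
  proof -
    have "inverse (real (Suc m)) \<le> 1" by (simp add: inverse_le_1_iff)
    then have "u/2 * inverse (real (Suc m)) \<le> u/2" using u by (simp add: mult_left_le)
    then show "dl m < u" using u unfolding dl_def by simp
    show "0 < dl m" using u unfolding dl_def by simp
  qed
  have r: "(\<lambda>m. q (u + dl m)) \<longlonglongrightarrow> q u"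
  proof (rule seq_right[OF q_rc])
    show "\<forall>\<^sub>F m in sequentially. u \<le> u + dl m" using dlpos by (simp add: less_imp_le)
  qed (use u in \<open>auto intro!: tendsto_eq_intros dl0\<close>)
  have lft: "(\<lambda>m. q (u - dl m)) \<longlonglongrightarrow> Lim (at_left u) q"
    by (rule seq_left[OF q_ll]) (use u dlpos in \<open>auto intro!: tendsto_eq_intros dl0\<close>)
  have "?A \<le> q u - Lim (at_left u) q"
    by (rule LIMSEQ_le_const[OF tendsto_diff[OF r lft]]) (use H dlpos in auto)
  then show ?thesis by (simp add: D_def L_def)
qed

end

context S
begin

lemma jump_upper: assumes u: "0 < u" shows "D u \<le> (x u - Lim (at_left u) x)\<^sup>2"
proof (rule field_le_epsilon)
  fix e :: real assume e: "0 < e"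
  define \<epsilon> where "\<epsilon> = e/3"
  have \<epsilon>: "0 < \<epsilon>" using e by (simp add: \<epsilon>_def)
  define Lx where "Lx = Lim (at_left u) x"
  define A where "A = (x u - Lx)\<^sup>2"
  define \<rho> where "\<rho> = min 1 (\<epsilon>/8)"
  have \<rho>: "0 < \<rho>" "\<rho> \<le> 1" "4 * \<rho> \<le> \<epsilon>" using \<epsilon> by (auto simp: \<rho>_def)
  have "\<forall>\<^sub>F y in at_right u. dist (x y) (x u) < \<rho>" using x_rc[of u] u \<rho> by (simp add: tendsto_iff)
  then obtain b1 where b1: "b1 > u" "\<And>y. y > u \<Longrightarrow> y < b1 \<Longrightarrow> \<bar>x y - x u\<bar> < \<rho>"
    unfolding eventually_at_right_field dist_real_def by blast
  have "\<forall>\<^sub>F y in at_left u. dist (x y) Lx < \<rho>" using x_ll[OF u] \<rho> by (simp add: tendsto_iff Lx_def)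
  then obtain b2 where b2: "b2 < u" "\<And>y. y > b2 \<Longrightarrow> y < u \<Longrightarrow> \<bar>x y - Lx\<bar> < \<rho>"
    unfolding eventually_at_left_field dist_real_def by blast
  define \<eta> where "\<eta> = min 1 (min (b1 - u) (u - b2))"
  have \<eta>: "0 < \<eta>" "\<eta> \<le> 1" "\<eta> \<le> b1 - u" "\<eta> \<le> u - b2" using b1 b2 by (auto simp: \<eta>_def)
  have xr: "\<bar>x y - x u\<bar> < \<rho>" if "u \<le> y" "y < u + \<eta>" for y
    using b1(2)[of y] that \<eta> \<rho> by (cases "y = u") auto
  have xl: "\<bar>x y - Lx\<bar> < \<rho>" if "u - \<eta> < y" "y < u" for y
    using b2(2)[of y] that \<eta> by auto
  have ev: "\<forall>\<^sub>F n in sequentially. (\<forall>s\<ge>0. \<bar>l n s - s\<bar> < \<eta>/2) \<and>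
      (\<forall>i<k n. t n i \<le> u + 1 \<longrightarrow> t n (Suc i) - t n i < \<eta>/2) \<and>
      a n (idx u n) < A + \<epsilon> \<and>
      (\<forall>s\<in>{0..u+1}. \<bar>Qn n (l n s) - q s\<bar> < \<epsilon>) \<and>
      (idx u n < k n \<and> t n (idx u n) < u \<and> u \<le> t n (Suc (idx u n)))"
  proof -
    have e1: "\<forall>\<^sub>F n in sequentially. \<forall>s\<ge>0. \<bar>l n s - s\<bar> < \<eta>/2" by (rule lid) (use \<eta> in simp)
    have e2: "\<forall>\<^sub>F n in sequentially. \<forall>i<k n. t n i \<le> u + 1 \<longrightarrow> t n (Suc i) - t n i < \<eta>/2"
      by (rule mesh) (use \<eta> in simp)
    have e3: "\<forall>\<^sub>F n in sequentially. a n (idx u n) < A + \<epsilon>"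
      by (rule order_tendstoD[OF a_idx_tendsto[OF u]]) (use \<epsilon> in \<open>simp add: A_def Lx_def\<close>)
    have e4: "\<forall>\<^sub>F n in sequentially. \<forall>s\<in>{0..u+1}. \<bar>Qn n (l n s) - q s\<bar> < \<epsilon>" by (rule conv[OF \<epsilon>])
    have e5: "\<forall>\<^sub>F n in sequentially. idx u n < k n \<and> t n (idx u n) < u \<and> u \<le> t n (Suc (idx u n))"
      by (rule idx_ev[OF u])
    show ?thesis using e1 e2 e3 e4 e5 by eventually_elim blast
  qed
  then obtain n where n: "\<forall>s\<ge>0. \<bar>l n s - s\<bar> < \<eta>/2"
      "\<forall>i<k n. t n i \<le> u + 1 \<longrightarrow> t n (Suc i) - t n i < \<eta>/2"
      "a n (idx u n) < A + \<epsilon>"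
      "\<forall>s\<in>{0..u+1}. \<bar>Qn n (l n s) - q s\<bar> < \<epsilon>"
      "idx u n < k n" "t n (idx u n) < u" "u \<le> t n (Suc (idx u n))"
    unfolding eventually_sequentially by blast
  define w where "w = l n u"
  have w: "u - \<eta>/2 < w" "w < u + \<eta>/2" using absD[OF n(1)[rule_format, of u]] u by (auto simp: w_def)
  have wpos: "0 < w" using l_smono[of 0 u n] u l0[of n] by (simp add: w_def)
  define P where "P = insert (w/2) {t n i | i. i < k n \<and> t n i < w}"
  have finP: "finite P" unfolding P_def by simp
  define \<xi> where "\<xi> = Max P"
  have \<xi>w: "\<xi> < w" unfolding \<xi>_def using finP wpos by (subst Max_less_iff) (auto simp: P_def)
  have \<xi>ge1: "w/2 \<le> \<xi>" unfolding \<xi>_def by (rule Max_ge[OF finP]) (simp add: P_def)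
  have \<xi>ge2: "t n i \<le> \<xi>" if "i < k n" "t n i < w" for i
    unfolding \<xi>_def by (rule Max_ge[OF finP]) (use that in \<open>auto simp: P_def\<close>)
  note \<xi>ge = \<xi>ge1 \<xi>ge2
  define y where "y = (\<xi> + w)/2"
  have y: "\<xi> < y" "y < w" "0 < y" using \<xi>w \<xi>ge(1) wpos by (auto simp: y_def)
  obtain \<tau> where \<tau>: "0 \<le> \<tau>" "l n \<tau> = y" using l_surj[of y n] y by auto
  have \<tau>u: "\<tau> < u"
  proof (rule ccontr)
    assume "\<not> \<tau> < u"
    then have "l n u \<le> l n \<tau>" using u by (intro l_mono) auto
    then show False using y \<tau> by (simp add: w_def)
  qed
  define I where "I = {i. i < k n \<and> y < t n i \<and> t n i \<le> w}"
  have Iw: "t n i = w" if iI: "i \<in> I" for i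
  proof (rule ccontr)
    assume ne: "t n i \<noteq> w"
    have ik: "i < k n" and yt: "y < t n i" and tw: "t n i \<le> w" using iI by (auto simp: I_def)
    then have "t n i < w" using ne by simp
    then have "t n i \<le> \<xi>" by (rule \<xi>ge2[OF ik])
    then show False using y(1) yt by simp
  qed
  have ai: "a n i \<le> A + \<epsilon>" if iI: "i \<in> I" for i
  proof -
    have ik: "i < k n" using iI by (simp add: I_def)
    have ti: "t n i = w" by (rule Iw[OF iI])
    have small: "a n i \<le> \<epsilon>" if "\<bar>x (t n (Suc i)) - x (t n i)\<bar> \<le> 2 * \<rho>"
    proof -
      have "(x (t n (Suc i)) - x (t n i))\<^sup>2 \<le> 4 * \<rho>" using small_sq[OF that] \<rho>(1,2) by simp
      then show ?thesis using \<rho>(3) unfolding a_def by linarith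
    qed
    show ?thesis
    proof (cases "t n i < u")
      case True
      have "t n (Suc (idx u n)) \<le> t n (k n)" using n(5) by (intro t_le) auto
      then have ukn: "u \<le> t n (k n)" using n(7) by simp
      have ile: "i \<le> idx u n" by (rule idx_props(4)[OF u ukn]) (use ik True in auto)
      show ?thesis
      proof (cases "i = idx u n")
        case True then show ?thesis using n(3) by simp
      next
        case False
        then have "Suc i \<le> idx u n" using ile by simp
        then have h1: "t n (Suc i) \<le> t n (idx u n)" using n(5) by (intro t_le) auto
        have h2: "t n i < t n (Suc i)" using t_step[OF ik] .
        have h3: "u - \<eta> < t n i" using ti w(1) \<eta>(1) by simp
        have "\<bar>x (t n (Suc i)) - Lx\<bar> < \<rho>" by (rule xl) (use h1 h2 h3 n(6) in linarith)+
        moreover have "\<bar>x (t n i) - Lx\<bar> < \<rho>" by (rule xl) (use h3 True in linarith)+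
        ultimately have "\<bar>x (t n (Suc i)) - x (t n i)\<bar> \<le> 2 * \<rho>" by linarith
        then have "a n i \<le> \<epsilon>" by (rule small)
        moreover have "0 \<le> A" by (simp add: A_def)
        ultimately show ?thesis by simp
      qed
    next
      case False
      have "t n i \<le> u + 1" using ti w(2) \<eta>(2) by simp
      then have h1: "t n (Suc i) - t n i < \<eta>/2" using n(2) ik by blast
      have h2: "t n i < t n (Suc i)" using t_step[OF ik] .
      have h3: "t n i < u + \<eta>/2" using ti w(2) by simp
      have h4: "u \<le> t n i" using False by simp
      have "\<bar>x (t n (Suc i)) - x u\<bar> < \<rho>" by (rule xr) (use h1 h2 h3 h4 in linarith)+
      moreover have "\<bar>x (t n i) - x u\<bar> < \<rho>" by (rule xr) (use h3 h4 \<eta>(1) in linarith)+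
      ultimately have "\<bar>x (t n (Suc i)) - x (t n i)\<bar> \<le> 2 * \<rho>" by linarith
      then have "a n i \<le> \<epsilon>" by (rule small)
      moreover have "0 \<le> A" by (simp add: A_def)
      ultimately show ?thesis by simp
    qed
  qed
  have sumI: "sum (a n) I \<le> A + \<epsilon>"
  proof (cases "I = {}")
    case True
    have "0 \<le> A" by (simp add: A_def)
    then show ?thesis using True \<epsilon> by simp
  next
    case False
    then obtain i where iI: "i \<in> I" by blast
    have "I = {i}"
    proof (intro equalityI subsetI)
      fix j assume jI: "j \<in> I"
      have "j < k n" "i < k n" using iI jI by (simp_all add: I_def)
      moreover have "t n j = t n i" using Iw[OF iI] Iw[OF jI] by simp
      ultimately have "j = i" using t_inj[of j n i] by simp
      then show "j \<in> {i}" by simp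
    qed (use iI in simp)
    then show ?thesis using ai[OF iI] by simp
  qed
  have "Qn n w - Qn n y = sum (a n) I" unfolding I_def by (rule Qn_diff) (use y in simp)
  moreover have "\<bar>Qn n w - q u\<bar> < \<epsilon>" unfolding w_def by (rule n(4)[rule_format]) (use u in simp)
  moreover have "\<bar>Qn n y - q \<tau>\<bar> < \<epsilon>" unfolding \<tau>(2)[symmetric] by (rule n(4)[rule_format]) (use \<tau>(1) \<tau>u in simp)
  moreover have "D u \<le> q u - q \<tau>" using L_ge[OF \<tau>(1) \<tau>u] by (simp add: D_def)
  ultimately have "D u \<le> A + 3 * \<epsilon>" using sumI by linarith
  then show "D u \<le> (x u - Lim (at_left u) x)\<^sup>2 + e" by (simp add: A_def Lx_def \<epsilon>_def)
qed

lemma jump_eq: assumes "0 < u" shows "(jump x u)\<^sup>2 = D u"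
  using jump_lower[OF assms] jump_upper[OF assms] assms by (simp add: jump_def)

end

context S
begin

definition Qe :: "real \<Rightarrow> real" where "Qe s = (if s < 0 then 0 else q s)"
definition mu :: "real measure" where "mu = restrict_space (interval_measure Qe) {0..}"

lemma Qe_mono: "s \<le> s' \<Longrightarrow> Qe s \<le> Qe s'"
  unfolding Qe_def using q_mono q_nonneg by auto

lemma Qe_rc: "continuous (at_right c) Qe"
proof (cases "c < 0")
  case True
  have "\<forall>\<^sub>F y in at_right c. Qe y = 0"
    unfolding eventually_at_right_field using True by (intro exI[of _ 0]) (auto simp: Qe_def)
  then have "(Qe \<longlongrightarrow> 0) (at_right c)" by (rule tendsto_eventually)
  then show ?thesis using True by (simp add: continuous_within Qe_def)
next
  case False
  have "\<forall>\<^sub>F y in at_right c. q y = Qe y"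
    unfolding eventually_at_right_field using False by (intro exI[of _ "c+1"]) (auto simp: Qe_def)
  moreover have "(q \<longlongrightarrow> q c) (at_right c)" using q_rc False by simp
  ultimately have "(Qe \<longlongrightarrow> q c) (at_right c)" using tendsto_cong by blast
  then show ?thesis using False by (simp add: continuous_within Qe_def)
qed

lemma sets_mu: "sets mu = sets (restrict_space borel {0::real..})"
  unfolding mu_def by (simp add: sets_restrict_space)

lemma space_mu: "space mu = {0..}"
  unfolding mu_def by (simp add: space_restrict_space)

lemma emeasure_mu: "A \<in> sets borel \<Longrightarrow> A \<subseteq> {0..} \<Longrightarrow> emeasure mu A = emeasure (interval_measure Qe) A"
  unfolding mu_def by (subst emeasure_restrict_space) (auto simp: Int_absorb2)

lemma IM_Ioc: "c \<le> b \<Longrightarrow> emeasure (interval_measure Qe) {c<..b} = Qe b - Qe c"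
  by (rule emeasure_interval_measure_Ioc) (auto intro: Qe_mono Qe_rc)

lemma mu_Ioc: "0 \<le> c \<Longrightarrow> c \<le> b \<Longrightarrow> emeasure mu {c<..b} = q b - q c"
  by (subst emeasure_mu) (auto simp: IM_Ioc Qe_def)

lemma mu_Icc: assumes "0 \<le> s" shows "emeasure mu {0..s} = q s"
proof -
  let ?M = "interval_measure Qe"
  have "emeasure ?M {-1<..s} = q s" using assms by (simp add: IM_Ioc Qe_def)
  moreover have "{-1<..s} = {-1<..<0} \<union> {0..s}" using assms by auto
  moreover have "emeasure ?M ({-1<..<0} \<union> {0..s}) = emeasure ?M {-1<..<0} + emeasure ?M {0..s}"
    by (rule plus_emeasure[symmetric]) auto
  moreover have "emeasure ?M {-1<..<0} = 0"
  proof -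
    have "emeasure ?M {-1<..<0} \<le> emeasure ?M {-1<..0}" by (rule emeasure_mono) auto
    also have "\<dots> = 0" by (simp add: IM_Ioc Qe_def q0)
    finally show ?thesis by simp
  qed
  ultimately have "emeasure ?M {0..s} = q s" by simp
  then show ?thesis by (subst emeasure_mu) auto
qed

lemma mu_fin: "emeasure mu {0..s} < \<infinity>"
  by (cases "0 \<le> s") (auto simp: mu_Icc)

lemma measure_mu_Icc: "0 \<le> s \<Longrightarrow> measure mu {0..s} = q s"
  using mu_Icc q_nonneg by (simp add: measure_def)

lemma measure_mu_Ioc: "0 \<le> c \<Longrightarrow> c \<le> b \<Longrightarrow> measure mu {c<..b} = q b - q c"
  using mu_Ioc q_mono by (simp add: measure_def)

lemma mu_0: "emeasure mu {0} = 0"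
  using mu_Icc[of 0] q0 by simp

end

lemma sum_split_le:
  fixes I :: "nat set" and a p :: "nat \<Rightarrow> real"
  assumes "finite I" "c \<le> d"
  shows "(\<Sum>i\<in>{i\<in>I. p i \<le> d}. g i) = (\<Sum>i\<in>{i\<in>I. p i \<le> c}. g i) + (\<Sum>i\<in>{i\<in>I. c < p i \<and> p i \<le> d}. g i)"
proof -
  have U: "{i\<in>I. p i \<le> d} = {i\<in>I. p i \<le> c} \<union> {i\<in>I. c < p i \<and> p i \<le> d}" using assms by auto
  show ?thesis unfolding U by (rule sum.union_disjoint) (use assms in auto)
qed

lemma grid_sum:
  fixes I :: "nat set" and a p :: "nat \<Rightarrow> real" and f :: "real \<Rightarrow> real" and b :: "nat \<Rightarrow> real"
  assumes fin: "finite I" and a: "\<And>i. i \<in> I \<Longrightarrow> 0 \<le> a i" and b: "\<And>j. b j \<le> b (Suc j)"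
    and F: "\<And>s. F s = (\<Sum>i\<in>{i\<in>I. p i \<le> s}. a i)" and eta: "0 \<le> \<eta>"
  shows "(\<forall>j<m. \<forall>i\<in>I. b j < p i \<and> p i \<le> b (Suc j) \<longrightarrow> \<bar>f (p i) - f (b j)\<bar> \<le> \<eta>) \<Longrightarrow>
    \<bar>(\<Sum>i\<in>{i\<in>I. p i \<le> b m}. a i * f (p i)) -
      ((\<Sum>i\<in>{i\<in>I. p i \<le> b 0}. a i * f (p i)) + (\<Sum>j<m. f (b j) * (F (b (Suc j)) - F (b j))))\<bar>
     \<le> \<eta> * (F (b m) - F (b 0))"
proof (induction m)
  case 0
  then show ?case by simp
next
  case (Suc m)
  let ?S = "{i\<in>I. b m < p i \<and> p i \<le> b (Suc m)}"
  have IH: "\<bar>(\<Sum>i\<in>{i\<in>I. p i \<le> b m}. a i * f (p i)) -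
      ((\<Sum>i\<in>{i\<in>I. p i \<le> b 0}. a i * f (p i)) + (\<Sum>j<m. f (b j) * (F (b (Suc j)) - F (b j))))\<bar>
     \<le> \<eta> * (F (b m) - F (b 0))" using Suc by auto
  have s1: "(\<Sum>i\<in>{i\<in>I. p i \<le> b (Suc m)}. a i * f (p i)) = (\<Sum>i\<in>{i\<in>I. p i \<le> b m}. a i * f (p i)) + (\<Sum>i\<in>?S. a i * f (p i))"
    by (rule sum_split_le[OF fin b])
  have s2: "F (b (Suc m)) - F (b m) = (\<Sum>i\<in>?S. a i)"
    unfolding F using sum_split_le[OF fin b, where p=p and g=a] by simp
  have "\<bar>(\<Sum>i\<in>?S. a i * f (p i)) - f (b m) * (\<Sum>i\<in>?S. a i)\<bar> = \<bar>\<Sum>i\<in>?S. a i * (f (p i) - f (b m))\<bar>"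
    by (simp add: sum_distrib_left sum_subtractf algebra_simps)
  also have "\<dots> \<le> (\<Sum>i\<in>?S. \<bar>a i * (f (p i) - f (b m))\<bar>)" by (rule sum_abs)
  also have "\<dots> \<le> (\<Sum>i\<in>?S. a i * \<eta>)"
  proof (rule sum_mono)
    fix i assume i: "i \<in> ?S"
    have "\<bar>f (p i) - f (b m)\<bar> \<le> \<eta>" using Suc.prems i by auto
    then show "\<bar>a i * (f (p i) - f (b m))\<bar> \<le> a i * \<eta>"
      using a[of i] i by (simp add: abs_mult mult_left_mono)
  qed
  also have "\<dots> = \<eta> * (\<Sum>i\<in>?S. a i)" by (simp add: sum_distrib_left mult.commute)
  finally have loc: "\<bar>(\<Sum>i\<in>?S. a i * f (p i)) - f (b m) * (\<Sum>i\<in>?S. a i)\<bar> \<le> \<eta> * (\<Sum>i\<in>?S. a i)" .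
  have "F (b (Suc m)) - F (b 0) = (F (b m) - F (b 0)) + (\<Sum>i\<in>?S. a i)" using s2 by simp
  then have e: "\<eta> * (F (b (Suc m)) - F (b 0)) = \<eta> * (F (b m) - F (b 0)) + \<eta> * (\<Sum>i\<in>?S. a i)"
    by (simp add: algebra_simps)
  show ?case unfolding s1 e using IH loc s2 by (simp add: abs_le_iff)
qed

lemma find_interval:
  fixes s :: "nat \<Rightarrow> real"
  assumes mono: "\<And>j. s j \<le> s (Suc j)"
  shows "s 0 < r \<Longrightarrow> r \<le> s m \<Longrightarrow> \<exists>j<m. s j < r \<and> r \<le> s (Suc j)"
proof (induction m)
  case 0 then show ?case by simp
next
  case (Suc m)
  show ?case
  proof (cases "r \<le> s m")
    case True then show ?thesis using Suc by (meson less_SucI)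
  next
    case False then show ?thesis using Suc.prems by (intro exI[of _ m]) auto
  qed
qed

context S
begin

lemma mu_sets: "A \<in> sets borel \<Longrightarrow> A \<subseteq> {0..} \<Longrightarrow> A \<in> sets mu"
  unfolding sets_mu by (subst sets_restrict_space_iff) auto

lemma integrable_mu_ind: "A \<in> sets borel \<Longrightarrow> A \<subseteq> {0..b} \<Longrightarrow> integrable mu (indicator A :: real \<Rightarrow> real)"
proof -
  assume A: "A \<in> sets borel" "A \<subseteq> {0..b}"
  then have "A \<inter> space mu = A" by (auto simp: space_mu)
  moreover have "A \<in> sets mu" using A by (intro mu_sets) auto
  moreover have "emeasure mu A \<le> emeasure mu {0..b}"
    by (rule emeasure_mono) (use A in \<open>auto intro: mu_sets\<close>)
  then have "emeasure mu A < \<infinity>" using mu_fin[of b] by (simp add: le_less_trans)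
  ultimately show ?thesis by (simp add: integrable_indicator_iff)
qed

lemma meas_f: "continuous_on {0..} f \<Longrightarrow> (f :: real \<Rightarrow> real) \<in> borel_measurable mu"
  using borel_measurable_continuous_on_restrict[of "{0::real..}" f] measurable_cong_sets[OF sets_mu refl]
  by blast

lemma integral_step:
  fixes f :: "real \<Rightarrow> real" and s :: "nat \<Rightarrow> real"
  assumes fc: "continuous_on {0..} f" and fK: "\<And>r. r \<ge> K \<Longrightarrow> f r = 0"
    and s0: "s 0 = 0" and smono: "\<And>j. s j \<le> s (Suc j)" and Km: "K \<le> s m" and eta: "0 \<le> \<eta>"
    and H: "\<And>j r. j < m \<Longrightarrow> s j < r \<Longrightarrow> r \<le> s (Suc j) \<Longrightarrow> \<bar>f r - f (s j)\<bar> \<le> \<eta>"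
  shows "integrable mu f"
    "\<bar>integral\<^sup>L mu f - (\<Sum>j<m. f (s j) * (q (s (Suc j)) - q (s j)))\<bar> \<le> \<eta> * q (s m)"
proof -
  have sle: "i \<le> j \<Longrightarrow> s i \<le> s j" for i j using lift_Suc_mono_le[of s, OF smono] by blast
  have snn: "0 \<le> s j" for j using sle[of 0 j] s0 by simp
  define g where "g r = (\<Sum>j<m. f (s j) * indicator {s j<..s (Suc j)} r)" for r
  define h where "h r = \<eta> * indicator {0<..s m} r + \<bar>f 0\<bar> * indicator {0} r" for r
  have intI: "integrable mu (indicator {s j<..s (Suc j)} :: real \<Rightarrow> real)" for j
    by (rule integrable_mu_ind[of _ "s (Suc j)"]) (use snn[of j] in auto)
  have gint: "integrable mu g" unfolding g_def
  proof (rule Bochner_Integration.integrable_sum)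
    fix j
    show "integrable mu (\<lambda>r. f (s j) * indicator {s j<..s (Suc j)} r)"
      by (rule integrable_mult_right) (rule intI)
  qed
  have hint: "integrable mu h" unfolding h_def
  proof (rule Bochner_Integration.integrable_add)
    show "integrable mu (\<lambda>r. \<eta> * indicator {0<..s m} r)"
      by (rule integrable_mult_right) (rule integrable_mu_ind[of _ "s m"], auto)
    show "integrable mu (\<lambda>r. \<bar>f 0\<bar> * indicator {0} r)"
      by (rule integrable_mult_right) (rule integrable_mu_ind[of _ "0"], auto)
  qed
  have fm: "f \<in> borel_measurable mu" by (rule meas_f[OF fc])
  have gm: "g \<in> borel_measurable mu" using gint by (rule borel_measurable_integrable)
  have bound: "\<bar>f r - g r\<bar> \<le> h r" if r: "r \<in> space mu" for r
  proof -
    have r0: "0 \<le> r" using r by (simp add: space_mu)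
    consider "r = 0" | "0 < r" "r \<le> s m" | "s m < r" using r0 by linarith
    then show ?thesis
    proof cases
      case 1
      have "g r = 0" unfolding g_def
      proof (intro sum.neutral ballI)
        fix j assume "j \<in> {..<m}"
        have "r \<notin> {s j<..s (Suc j)}" using 1 snn[of j] by auto
        then show "f (s j) * indicator {s j<..s (Suc j)} r = 0" by simp
      qed
      then show ?thesis using 1 by (simp add: h_def)
    next
      case 2
      obtain j where j: "j < m" "s j < r" "r \<le> s (Suc j)" using find_interval[of s r m, OF smono] 2 s0 by auto
      have ind: "indicator {s j'<..s (Suc j')} r = (if j' = j then 1 else (0::real))" if "j' < m" for j'
      proof (cases "j' = j")
        case True then show ?thesis using j by simp
      next
        case False
        then consider "j' < j" | "j < j'" by linarith
        then have "r \<notin> {s j'<..s (Suc j')}"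
        proof cases
          case 1 then have "s (Suc j') \<le> s j" by (intro sle) simp
          then show ?thesis using j by auto
        next
          case 2 then have "s (Suc j) \<le> s j'" by (intro sle) simp
          then show ?thesis using j by auto
        qed
        then show ?thesis using False by simp
      qed
      have "g r = (\<Sum>j'<m. f (s j') * (if j' = j then 1 else 0))"
        unfolding g_def by (rule sum.cong) (use ind in auto)
      also have "\<dots> = f (s j)" using j(1) by (simp add: if_distrib sum.delta cong: if_cong)
      finally have "g r = f (s j)" .
      moreover have "h r = \<eta>" using 2 by (simp add: h_def)
      ultimately show ?thesis using H[OF j] by simp
    next
      case 3
      have "g r = 0" unfolding g_def
      proof (intro sum.neutral ballI)
        fix j assume "j \<in> {..<m}"
        then have "s (Suc j) \<le> s m" by (intro sle) simp
        then have "r \<notin> {s j<..s (Suc j)}" using 3 by auto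
        then show "f (s j) * indicator {s j<..s (Suc j)} r = 0" by simp
      qed
      moreover have "f r = 0" using 3 Km by (intro fK) simp
      moreover have "h r = 0" using 3 snn[of m] by (simp add: h_def)
      ultimately show ?thesis by simp
    qed
  qed
  have fgint: "integrable mu (\<lambda>r. f r - g r)"
  proof (rule Bochner_Integration.integrable_bound[OF hint])
    show "(\<lambda>r. f r - g r) \<in> borel_measurable mu" using fm gm by simp
    show "AE r in mu. norm (f r - g r) \<le> norm (h r)"
      using bound by (intro AE_I2) (simp add: order.trans[OF _ abs_ge_self])
  qed
  have "integrable mu (\<lambda>r. (f r - g r) + g r)" using fgint gint by (rule Bochner_Integration.integrable_add)
  then show fint: "integrable mu f" by simp
  have intg: "integral\<^sup>L mu g = (\<Sum>j<m. f (s j) * (q (s (Suc j)) - q (s j)))"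
  proof -
    have "integral\<^sup>L mu g = (\<Sum>j<m. f (s j) * integral\<^sup>L mu (indicator {s j<..s (Suc j)}))"
      unfolding g_def by (subst Bochner_Integration.integral_sum) (use intI in auto)
    also have "\<dots> = (\<Sum>j<m. f (s j) * (q (s (Suc j)) - q (s j)))"
    proof (rule sum.cong)
      fix j assume "j \<in> {..<m}"
      have "{s j<..s (Suc j)} \<inter> space mu = {s j<..s (Suc j)}" using snn[of j] by (auto simp: space_mu)
      then show "f (s j) * integral\<^sup>L mu (indicator {s j<..s (Suc j)}) = f (s j) * (q (s (Suc j)) - q (s j))"
        using measure_mu_Ioc[OF snn smono] by simp
    qed simp
    finally show ?thesis .
  qed
  have inth: "integral\<^sup>L mu h = \<eta> * q (s m)"
  proof -
    have i1: "integrable mu (indicator {0<..s m} :: real \<Rightarrow> real)" by (rule integrable_mu_ind[of _ "s m"]) auto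
    have i2: "integrable mu (indicator {0} :: real \<Rightarrow> real)" by (rule integrable_mu_ind[of _ 0]) auto
    have "integral\<^sup>L mu h = \<eta> * measure mu {0<..s m} + \<bar>f 0\<bar> * measure mu {0}"
      unfolding h_def using i1 i2 by (simp add: space_mu Int_absorb2 subset_eq)
    moreover have "measure mu {0<..s m} = q (s m)" using measure_mu_Ioc[of 0 "s m"] snn q0 by simp
    moreover have "measure mu {0} = 0" using mu_0 by (simp add: measure_def)
    ultimately show ?thesis by simp
  qed
  have "\<bar>integral\<^sup>L mu f - integral\<^sup>L mu g\<bar> = \<bar>integral\<^sup>L mu (\<lambda>r. f r - g r)\<bar>"
    using fint gint by simp
  also have "\<dots> \<le> integral\<^sup>L mu (\<lambda>r. norm (f r - g r))"
    using Bochner_Integration.integral_norm_bound[of mu "\<lambda>r. f r - g r"] by simp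
  also have "\<dots> \<le> integral\<^sup>L mu h"
    by (rule Bochner_Integration.integral_mono) (use fgint hint bound in auto)
  finally show "\<bar>integral\<^sup>L mu f - (\<Sum>j<m. f (s j) * (q (s (Suc j)) - q (s j)))\<bar> \<le> \<eta> * q (s m)"
    using intg inth by simp
qed

end

context S
begin

lemma l_tendsto: assumes "0 \<le> r" shows "(\<lambda>n. l n r) \<longlonglongrightarrow> r"
  unfolding tendsto_iff dist_real_def
proof (intro allI impI)
  fix e :: real assume "e > 0"
  show "\<forall>\<^sub>F n in sequentially. \<bar>l n r - r\<bar> < e"
    using lid[OF \<open>e > 0\<close>] by (rule eventually_mono) (use assms in auto)
qed

lemma f_l_tendsto: assumes fc: "continuous_on {0..} f" and r: "0 \<le> r"
  shows "(\<lambda>n. f (l n r)) \<longlonglongrightarrow> (f r :: real)"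
  by (rule continuous_on_tendsto_compose[OF fc l_tendsto[OF r]]) (use r l_nonneg in auto)

lemma vague:
  fixes f :: "real \<Rightarrow> real"
  assumes fc: "continuous_on {0..} f" and fK0: "\<exists>K. \<forall>s\<ge>K. f s = 0"
  shows "(\<lambda>n. qv_measure_int k t x n f) \<longlonglongrightarrow> integral\<^sup>L mu f"
  unfolding tendsto_iff dist_real_def
proof (intro allI impI)
  fix e :: real assume e: "e > 0"
  obtain K0 where K0: "\<And>s. s \<ge> K0 \<Longrightarrow> f s = 0" using fK0 by blast
  define K1 where "K1 = max K0 0"
  define Kp where "Kp = K1 + 1"
  have K1: "0 \<le> K1" "K0 \<le> K1" by (auto simp: K1_def)
  have Kp: "1 \<le> Kp" using K1 by (simp add: Kp_def)
  have fK: "\<And>r. r \<ge> K1 \<Longrightarrow> f r = 0" using K0 K1 by auto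
  define C where "C = q Kp"
  have C: "0 \<le> C" using q_nonneg Kp by (simp add: C_def)
  define \<eta> where "\<eta> = e / (4 * (C + 1))"
  have \<eta>: "0 < \<eta>" using e C by (simp add: \<eta>_def)
  have \<eta>C: "\<eta> * (C + 1) = e/4" using C by (simp add: \<eta>_def field_simps)
  have uc: "uniformly_continuous_on {0..Kp+1} f"
    by (rule compact_uniformly_continuous) (use fc in \<open>auto intro: continuous_on_subset\<close>)
  obtain d where d: "d > 0" "\<And>r r'. r \<in> {0..Kp+1} \<Longrightarrow> r' \<in> {0..Kp+1} \<Longrightarrow> \<bar>r' - r\<bar> < d \<Longrightarrow> \<bar>f r' - f r\<bar> < \<eta>"
    using uc \<eta> unfolding uniformly_continuous_on_def dist_real_def by metis
  define \<delta> where "\<delta> = min d 1"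
  have \<delta>: "0 < \<delta>" "\<delta> \<le> d" "\<delta> \<le> 1" using d by (auto simp: \<delta>_def)
  have fuc: "\<bar>f r' - f r\<bar> \<le> \<eta>" if "0 \<le> r" "r \<le> Kp+1" "0 \<le> r'" "r' \<le> Kp+1" "\<bar>r' - r\<bar> < \<delta>" for r r'
    using d(2)[of r r'] that \<delta> by force
  obtain m :: nat where m: "2*Kp/\<delta> < real m" using reals_Archimedean2 by blast
  have mpos: "0 < real m" using m Kp \<delta> by (smt (verit) divide_pos_pos)
  define h where "h = Kp / real m"
  have hpos: "0 < h" using Kp mpos by (simp add: h_def)
  have hd: "h < \<delta>/2"
  proof -
    have "2*Kp < real m * \<delta>" using m \<delta> by (simp add: divide_less_eq mult.commute)
    then show ?thesis using mpos by (simp add: h_def divide_less_eq mult.commute)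
  qed
  define s where "s j = real j * h" for j
  have s0: "s 0 = 0" by (simp add: s_def)
  have sSuc: "s (Suc j) = s j + h" for j by (simp add: s_def algebra_simps)
  have smono: "s j \<le> s (Suc j)" for j using hpos sSuc[of j] by simp
  have sm: "s m = Kp" using mpos by (simp add: s_def h_def)
  have sle: "i \<le> j \<Longrightarrow> s i \<le> s j" for i j using lift_Suc_mono_le[of s, OF smono] by blast
  have snn: "0 \<le> s j" for j using hpos by (simp add: s_def)
  have sleK: "j \<le> m \<Longrightarrow> s j \<le> Kp" for j using sle[of j m] sm by simp
  define T where "T = f 0 * q 0 + (\<Sum>j<m. f (s j) * (q (s (Suc j)) - q (s j)))"
  have IT: "\<bar>integral\<^sup>L mu f - T\<bar> \<le> \<eta> * C"
  proof -
    have "\<bar>integral\<^sup>L mu f - (\<Sum>j<m. f (s j) * (q (s (Suc j)) - q (s j)))\<bar> \<le> \<eta> * q (s m)"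
    proof (rule integral_step(2)[OF fc fK s0 smono])
      show "K1 \<le> s m" using sm by (simp add: Kp_def)
      show "0 \<le> \<eta>" using \<eta> by simp
      fix j r assume j: "j < m" "s j < r" "r \<le> s (Suc j)"
      have "s (Suc j) \<le> Kp" using j by (intro sleK) simp
      then show "\<bar>f r - f (s j)\<bar> \<le> \<eta>"
        using j snn[of j] sSuc[of j] hd \<delta> by (intro fuc) auto
    qed
    then show ?thesis by (simp add: T_def q0 sm C_def)
  qed
  define Tn where "Tn n = f 0 * Qn n (l n 0) + (\<Sum>j<m. f (l n (s j)) * (Qn n (l n (s (Suc j))) - Qn n (l n (s j))))" for n
  have TnT: "Tn \<longlonglongrightarrow> T"
    unfolding Tn_def T_def
    by (intro tendsto_add tendsto_mult tendsto_const conv_pt tendsto_sum tendsto_diff f_l_tendsto[OF fc])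
       (auto simp: snn)
  have ev1: "\<forall>\<^sub>F n in sequentially. \<forall>r\<ge>0. \<bar>l n r - r\<bar> < \<delta>/4" by (rule lid) (use \<delta> in simp)
  have ev2: "\<forall>\<^sub>F n in sequentially. \<bar>Tn n - T\<bar> < e/4"
  proof -
    have "e/4 > 0" using e by simp
    then show ?thesis using TnT unfolding tendsto_iff dist_real_def by blast
  qed
  have ev3: "\<forall>\<^sub>F n in sequentially. Qn n (l n Kp) < C + 1"
    by (rule order_tendstoD[OF conv_pt]) (use Kp in \<open>auto simp: C_def\<close>)
  show "\<forall>\<^sub>F n in sequentially. \<bar>qv_measure_int k t x n f - integral\<^sup>L mu f\<bar> < e"
    using ev1 ev2 ev3
  proof eventually_elim
    case (elim n)
    define b where "b j = l n (s j)" for j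
    have bmono: "b j \<le> b (Suc j)" for j unfolding b_def by (intro l_mono snn smono)
    have b0: "b 0 = 0" by (simp add: b_def s0 l0)
    have bnn: "0 \<le> b j" for j unfolding b_def by (intro l_nonneg snn)
    have bclose: "\<bar>b j - s j\<bar> < \<delta>/4" for j unfolding b_def using elim(1) snn by blast
    have bm: "K1 < b m" "b m < Kp + 1"
      using absD[OF bclose[of m]] sm \<delta> by (auto simp: Kp_def)
    have bleK: "j \<le> m \<Longrightarrow> b j < Kp + 1" for j
      using absD[OF bclose[of j]] sleK[of j] \<delta> by auto
    have Hb: "\<forall>j<m. \<forall>i\<in>{..<k n}. b j < t n i \<and> t n i \<le> b (Suc j) \<longrightarrow> \<bar>f (t n i) - f (b j)\<bar> \<le> \<eta>"
    proof (intro allI impI ballI)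
      fix j i assume j: "j < m" and i: "i \<in> {..<k n}" and bt: "b j < t n i \<and> t n i \<le> b (Suc j)"
      have "b (Suc j) - b j < \<delta>"
        using absD[OF bclose[of j]] absD[OF bclose[of "Suc j"]] sSuc[of j] hd by auto
      then show "\<bar>f (t n i) - f (b j)\<bar> \<le> \<eta>"
        using bt bnn[of j] bleK[of "Suc j"] bleK[of j] j by (intro fuc) auto
    qed
    have Fq: "\<And>r. Qn n r = (\<Sum>i\<in>{i\<in>{..<k n}. t n i \<le> r}. a n i)"
      unfolding Qn_def by (intro sum.cong) auto
    have G: "\<bar>(\<Sum>i\<in>{i\<in>{..<k n}. t n i \<le> b m}. a n i * f (t n i)) -
      ((\<Sum>i\<in>{i\<in>{..<k n}. t n i \<le> b 0}. a n i * f (t n i)) + (\<Sum>j<m. f (b j) * (Qn n (b (Suc j)) - Qn n (b j))))\<bar>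
     \<le> \<eta> * (Qn n (b m) - Qn n (b 0))"
      by (rule grid_sum[OF _ _ bmono Fq _ Hb]) (use a_nonneg \<eta> in auto)
    have S0: "(\<Sum>i\<in>{i\<in>{..<k n}. t n i \<le> b 0}. a n i * f (t n i)) = f 0 * Qn n (b 0)"
    proof -
      have "(\<Sum>i\<in>{i\<in>{..<k n}. t n i \<le> b 0}. a n i * f (t n i)) = (\<Sum>i\<in>{i\<in>{..<k n}. t n i \<le> b 0}. a n i * f 0)"
      proof (rule sum.cong)
        fix i assume "i \<in> {i\<in>{..<k n}. t n i \<le> b 0}"
        then have "t n i = 0" using t_nonneg[of i n] b0 by auto
        then show "a n i * f (t n i) = a n i * f 0" by simp
      qed simp
      also have "\<dots> = f 0 * Qn n (b 0)" unfolding Fq by (simp add: sum_distrib_left mult.commute)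
      finally show ?thesis .
    qed
    have Sall: "qv_measure_int k t x n f = (\<Sum>i\<in>{i\<in>{..<k n}. t n i \<le> b m}. a n i * f (t n i))"
    proof -
      have "qv_measure_int k t x n f = (\<Sum>i<k n. a n i * f (t n i))" by (simp add: qv_measure_int_def a_def)
      also have "\<dots> = (\<Sum>i\<in>{i\<in>{..<k n}. t n i \<le> b m}. a n i * f (t n i))"
      proof (rule sum.mono_neutral_right)
        show "\<forall>i\<in>{..<k n} - {i\<in>{..<k n}. t n i \<le> b m}. a n i * f (t n i) = 0"
        proof
          fix i assume "i \<in> {..<k n} - {i\<in>{..<k n}. t n i \<le> b m}"
          then have "b m < t n i" by auto
          then have "f (t n i) = 0" using bm(1) by (intro fK) simp
          then show "a n i * f (t n i) = 0" by simp
        qed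
      qed auto
      finally show ?thesis .
    qed
    have Tnb: "Tn n = f 0 * Qn n (b 0) + (\<Sum>j<m. f (b j) * (Qn n (b (Suc j)) - Qn n (b j)))"
      by (simp add: Tn_def b_def s0)
    have D1: "\<bar>qv_measure_int k t x n f - Tn n\<bar> \<le> \<eta> * Qn n (b m)"
    proof -
      have "\<eta> * (Qn n (b m) - Qn n (b 0)) \<le> \<eta> * Qn n (b m)"
        using \<eta> Qn_nonneg[of n "b 0"] by (simp add: algebra_simps)
      then show ?thesis using G unfolding Sall Tnb S0 by linarith
    qed
    have "Qn n (b m) < C + 1" using elim(3) by (simp add: b_def sm)
    then have "\<eta> * Qn n (b m) \<le> \<eta> * (C + 1)" using \<eta> by (simp add: less_imp_le)
    then have D1': "\<bar>qv_measure_int k t x n f - Tn n\<bar> \<le> e/4" using D1 \<eta>C by linarith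
    have "\<eta> * C \<le> e/4" using \<eta>C \<eta> by (simp add: algebra_simps)
    then show ?case using D1' elim(2) IT e by linarith
  qed
qed

end

definition phi :: "real \<Rightarrow> nat \<Rightarrow> real \<Rightarrow> real" where
  "phi b j r = max 0 (min 1 (1 - (r - b) * real (Suc j)))"

lemma phi_cont: "continuous_on A (phi b j)"
  unfolding phi_def by (intro continuous_intros)

lemma phi_zero: "r \<ge> b + 1 \<Longrightarrow> phi b j r = 0"
proof -
  assume r: "r \<ge> b + 1"
  have "1 \<le> (r - b) * real (Suc j)"
  proof -
    have "1 * 1 \<le> (r - b) * real (Suc j)" by (rule mult_mono) (use r in auto)
    then show ?thesis by simp
  qed
  then show ?thesis unfolding phi_def by simp
qed

lemma phi_bound: "\<bar>phi b j r\<bar> \<le> 1" "0 \<le> phi b j r" unfolding phi_def by auto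

lemma phi_lim: "(\<lambda>j. phi b j r) \<longlonglongrightarrow> (if r \<le> b then 1 else 0)"
proof (cases "r \<le> b")
  case True
  then have "phi b j r = 1" for j
  proof -
    have "(r - b) * real (Suc j) \<le> 0" using True by (simp add: mult_nonpos_nonneg)
    then show ?thesis unfolding phi_def by simp
  qed
  then show ?thesis using True by simp
next
  case False
  obtain N :: nat where N: "1 / (r - b) < real N" using reals_Archimedean2 by blast
  have "\<forall>\<^sub>F j in sequentially. phi b j r = 0"
    unfolding eventually_sequentially
  proof (intro exI allI impI)
    fix j assume "N \<le> j"
    then have "1 / (r - b) < real (Suc j)" using N by simp
    then have "1 \<le> (r - b) * real (Suc j)" using False by (simp add: divide_less_eq mult.commute)
    then show "phi b j r = 0" unfolding phi_def by simp
  qed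
  then show ?thesis using False by (simp add: tendsto_eventually)
qed

lemma phi_integral_lim:
  fixes N :: "real measure"
  assumes sN: "sets N = sets (restrict_space borel {0::real..})" and fin: "\<And>T. emeasure N {0..T} < \<infinity>"
    and b: "0 \<le> b"
  shows "(\<lambda>j. integral\<^sup>L N (phi b j)) \<longlonglongrightarrow> measure N {0..b}"
proof -
  have sp: "space N = {0..}" using sets_eq_imp_space_eq[OF sN] by (simp add: space_restrict_space)
  have meas: "g \<in> borel_measurable N" if "continuous_on {0..} g" for g :: "real \<Rightarrow> real"
    using borel_measurable_continuous_on_restrict[OF that] measurable_cong_sets[OF sN refl] by blast
  have indint: "integrable N (indicator A :: real \<Rightarrow> real)" if "A \<in> sets borel" "A \<subseteq> {0..T}" for A T
  proof -
    have As: "A \<in> sets N" unfolding sN using that by (subst sets_restrict_space_iff) auto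
    have "emeasure N A \<le> emeasure N {0..T}"
      by (rule emeasure_mono) (use that in \<open>auto simp: sN sets_restrict_space_iff\<close>)
    then have "emeasure N A < \<infinity>" using fin[of T] by (simp add: le_less_trans)
    moreover have "A \<inter> space N = A" using that sp by auto
    ultimately show ?thesis using As by (simp add: integrable_indicator_iff)
  qed
  have lim: "(\<lambda>j. integral\<^sup>L N (phi b j)) \<longlonglongrightarrow> integral\<^sup>L N (indicator {0..b})"
  proof (rule integral_dominated_convergence[where w="indicator {0..b+1} :: real \<Rightarrow> real"])
    have "integrable N (indicator {0..b} :: real \<Rightarrow> real)" by (rule indint[of _ b]) auto
    then show "(indicator {0..b} :: real \<Rightarrow> real) \<in> borel_measurable N" by (rule borel_measurable_integrable)
    show "phi b j \<in> borel_measurable N" for j by (rule meas[OF phi_cont])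
    show "integrable N (indicator {0..b+1} :: real \<Rightarrow> real)" by (rule indint[of _ "b+1"]) auto
    show "AE r in N. (\<lambda>j. phi b j r) \<longlonglongrightarrow> indicator {0..b} r"
    proof (rule AE_I2)
      fix r assume "r \<in> space N"
      then have "0 \<le> r" using sp by auto
      then have "indicator {0..b} r = (if r \<le> b then 1 else (0::real))" by (simp add: indicator_def)
      then show "(\<lambda>j. phi b j r) \<longlonglongrightarrow> indicator {0..b} r" using phi_lim[of b r] by simp
    qed
    show "AE r in N. norm (phi b j r) \<le> indicator {0..b+1} r" for j
    proof (rule AE_I2)
      fix r assume "r \<in> space N"
      then have "0 \<le> r" using sp by auto
      then show "norm (phi b j r) \<le> indicator {0..b+1} r"
        using phi_bound[of b j r] phi_zero[of b r j] by (cases "r \<le> b + 1") (auto simp: indicator_def)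
    qed
  qed
  moreover have "integral\<^sup>L N (indicator {0..b}) = measure N {0..b}"
    using sp by (simp add: Int_absorb2 subset_eq)
  ultimately show ?thesis by simp
qed

context S
begin

lemma qv_limit_mu: "qv_limit k t x mu"
proof -
  have jD: "(jump x u)\<^sup>2 = D u" if "u \<in> {0<..s}" for u s using jump_eq[of u] that by simp
  have inf_eq: "(\<Sum>\<^sub>\<infinity>u\<in>{0<..s}. (jump x u)\<^sup>2) = infsum D {0<..s}" for s
    by (rule infsum_cong) (rule jD)
  have Geq: "measure mu {0..s} - (\<Sum>\<^sub>\<infinity>u\<in>{0<..s}. (jump x u)\<^sup>2) = G s" if "s \<in> {0..}" for s
    using that by (simp add: inf_eq measure_mu_Icc G_def)
  show ?thesis
    unfolding qv_limit_def
  proof (intro conjI allI impI)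
    show "sets mu = sets (restrict_space borel {0..})" by (rule sets_mu)
    show "emeasure mu {0..T} < \<infinity>" for T by (rule mu_fin)
    show "(\<lambda>n. qv_measure_int k t x n f) \<longlonglongrightarrow> integral\<^sup>L mu f"
      if "continuous_on {0..} f \<and> (\<exists>K. \<forall>s\<ge>K. f s = 0)" for f
      using that vague by blast
    show "(\<lambda>u. (jump x u)\<^sup>2) summable_on {0<..s}" if "0 \<le> s" for s
    proof -
      have "D summable_on {0<..s}" by (rule D_summable[of 0]) auto
      then show ?thesis by (rule summable_on_cong[THEN iffD1, rotated]) (use jD in auto)
    qed
    show "continuous_on {0..} (\<lambda>s. measure mu {0..s} - (\<Sum>\<^sub>\<infinity>u\<in>{0<..s}. (jump x u)\<^sup>2))"
      using G_cont by (rule continuous_on_cong[THEN iffD1, rotated 2]) (use Geq in auto)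
    show "mono_on {0..} (\<lambda>s. measure mu {0..s} - (\<Sum>\<^sub>\<infinity>u\<in>{0<..s}. (jump x u)\<^sup>2))"
      unfolding mono_on_def using Geq G_mono by auto
  qed
qed

lemma qv_unique: assumes "qv_limit k t x \<nu>" shows "\<nu> = mu"
proof (rule measure_eq_nonneg_Icc)
  have sN: "sets \<nu> = sets (restrict_space borel {0::real..})" and finN: "\<And>T. emeasure \<nu> {0..T} < \<infinity>"
    and vN: "\<And>f. continuous_on {0..} f \<and> (\<exists>K. \<forall>s\<ge>K. f s = 0) \<Longrightarrow>
          (\<lambda>n. qv_measure_int k t x n f) \<longlonglongrightarrow> integral\<^sup>L \<nu> f"
    using assms unfolding qv_limit_def by auto
  show "sets \<nu> = sets (restrict_space borel {0::real..})" by (rule sN)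
  show "sets mu = sets (restrict_space borel {0::real..})" by (rule sets_mu)
  show "emeasure \<nu> {0..b} < \<infinity>" for b by (rule finN)
  fix b :: real assume b: "0 \<le> b"
  have ieq: "integral\<^sup>L \<nu> (phi b j) = integral\<^sup>L mu (phi b j)" for j
  proof -
    have c: "continuous_on {0..} (phi b j) \<and> (\<exists>K. \<forall>s\<ge>K. phi b j s = 0)"
      using phi_cont phi_zero by blast
    show ?thesis using LIMSEQ_unique[OF vN[OF c] vague[of "phi b j"]] c by blast
  qed
  have l1: "(\<lambda>j. integral\<^sup>L mu (phi b j)) \<longlonglongrightarrow> measure \<nu> {0..b}"
    using phi_integral_lim[OF sN finN b] ieq by simp
  have "measure \<nu> {0..b} = measure mu {0..b}"
    using LIMSEQ_unique[OF l1 phi_integral_lim[OF sets_mu mu_fin b]] .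
  then show "emeasure \<nu> {0..b} = emeasure mu {0..b}"
    using emeasure_eq_ennreal_measure[of \<nu> "{0..b}"] emeasure_eq_ennreal_measure[of mu "{0..b}"]
      finN[of b] mu_fin[of b] by simp
qed

end

theorem proposition2p6:
  fixes k :: "nat \<Rightarrow> nat" and t :: "nat \<Rightarrow> nat \<Rightarrow> real"
    and x q :: "real \<Rightarrow> real"
  assumes "partition_seq k t"
    and "cadlag x"
    and "cadlag q"
    and "skorokhod_tendsto (qv_approx k t x) q"
  shows "in_Q0 k t x \<and> (\<forall>s\<ge>0. q s = quad_var k t x s)"
proof -
  obtain l where l1: "\<forall>n. time_change (l n)"
    and l2: "\<forall>\<epsilon>>0. \<forall>\<^sub>F n in sequentially. \<forall>s\<ge>0. \<bar>l n s - s\<bar> < \<epsilon>"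
    and l3: "\<forall>N. \<forall>\<epsilon>>0. \<forall>\<^sub>F n in sequentially. \<forall>s\<in>{0..N}. \<bar>qv_approx k t x n (l n s) - q s\<bar> < \<epsilon>"
    using assms(4) unfolding skorokhod_tendsto_def by blast
  interpret S k t x q l
  proof
    show "partition_seq k t" by (rule assms(1))
    show "cadlag x" by (rule assms(2))
    show "cadlag q" by (rule assms(3))
    show "time_change (l n)" for n using l1 by blast
    show "\<forall>\<^sub>F n in sequentially. \<forall>s\<ge>0. \<bar>l n s - s\<bar> < \<epsilon>" if "\<epsilon> > 0" for \<epsilon>
      using l2 that by blast
    show "\<forall>\<^sub>F n in sequentially. \<forall>s\<in>{0..N}. \<bar>qv_approx k t x n (l n s) - q s\<bar> < \<epsilon>" if "\<epsilon> > 0" for N \<epsilon>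
      using l3 that by blast
  qed
  have Q: "in_Q0 k t x" unfolding in_Q0_def using assms(2) qv_limit_mu by blast
  have T: "(THE \<mu>. qv_limit k t x \<mu>) = mu"
    by (rule the_equality[where P="qv_limit k t x"]) (auto intro: qv_limit_mu qv_unique)
  have "q s = quad_var k t x s" if "0 \<le> s" for s
    unfolding quad_var_def T using measure_mu_Icc[OF that] by simp
  then show ?thesis using Q by blast
qed

end
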